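(* In the social learning model, suppose the left tail of $G_-$ is convex and differentiable. Then there exists a positive integer $z$ such that for all $t\ge1$ and $s\ge1$: if $a_t=a_{t+1}=\cdots=a_{t+s-1}=+1$, then $\ell_{t+s}\ge \ell^*_{s-z}$.
   Context: Social learning model. A state $\theta\in\{-1,+1\}$ is drawn with $\mathbb{P}(\theta=+1)=\mathbb{P}(\theta=-1)=1/2$. Agents $t=1,2,\dots$ receive private signals $s_t\in\mathbb{R}$ that are i.i.d. conditionally on $\theta$, with CDF $F_+$ if $\theta=+1$ and $F_-$ if $\theta=-1$; $F_+$ and $F_-$ are mutually absolutely continuous. Let $L_t=\log\frac{\mathbb{P}(\theta=+1\mid s_t)}{\mathbb{P}(\theta=-1\mid s_t)}$ be the private log-likelihood ratio, and let $G_+$, $G_-$ denote the CDFs of $L_t$ conditional on $\theta=+1$, $\theta=-1$ respectively. Signals are assumed unbounded: for every $M\in\mathbb{R}$, $\mathbb{P}(L_t>M)>0$ and $\mathbb{P}(L_t<-M)>0$. Agent $t$ observes $a_1,\dots,a_{t-1}$ and her own signal and chooses $a_t\in\{-1,+1\}$ (utility $1$ if $a_t=\theta$, else $0$). The public belief is $\mu_t=\mathbb{P}(\theta=+1\mid a_1,\dots,a_{t-1})$ and $\ell_t=\log\frac{\mu_t}{1-\mu_t}$ (so $\ell_1=0$). In equilibrium $a_t=+1$ iff $\ell_t+L_t>0$, and otherwise $a_t=-1$. Consequently $\ell_{t+1}=\ell_t+D_+(\ell_t)$ if $a_t=+1$ and $\ell_{t+1}=\ell_t+D_-(\ell_t)$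 if $a_t=-1$, where $D_+(x)=\log\frac{1-G_+(-x)}{1-G_-(-x)}$ and $D_-(x)=\log\frac{G_+(-x)}{G_-(-x)}$. We write $\mathbb{P}_+(\cdot)=\mathbb{P}(\cdot\mid\theta=+1)$ and $\mathbb{E}_+$ for the corresponding expectation. "The left tail of $G_-$ is convex and differentiable" means: there exists $x_0\in\mathbb{R}$ such that the restriction of $G_-$ to $(-\infty,x_0)$ is convex and differentiable. $\ell^*_t$ denotes the value of $\ell_t$ on the event $a_1=\cdots=a_{t-1}=+1$, i.e., $\ell^*_1=0$ and $\ell^*_{t+1}=\ell^*_t+D_+(\ell^*_t)$; by convention $\ell^*_j=0$ for integers $j\le 1$. *)

theory Defs
  imports "HOL-Probability.Probability"
begin

text \<open>Social learning model. Fp, Fm are the signal distributions (on the real line)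
  conditional on theta = +1 and theta = -1 respectively.\<close>

definition priv_llr :: "real measure \<Rightarrow> real measure \<Rightarrow> real \<Rightarrow> real" where
  "priv_llr Fp Fm s = ln (enn2real (RN_deriv Fm Fp s))"

definition Gp :: "real measure \<Rightarrow> real measure \<Rightarrow> real \<Rightarrow> real" where
  "Gp Fp Fm x = measure Fp {s. priv_llr Fp Fm s \<le> x}"

definition Gm :: "real measure \<Rightarrow> real measure \<Rightarrow> real \<Rightarrow> real" where
  "Gm Fp Fm x = measure Fm {s. priv_llr Fp Fm s \<le> x}"

definition Dp :: "real measure \<Rightarrow> real measure \<Rightarrow> real \<Rightarrow> real" where
  "Dp Fp Fm x = ln ((1 - Gp Fp Fm (- x)) / (1 - Gm Fp Fm (- x)))"

definition Dm :: "real measure \<Rightarrow> real measure \<Rightarrow> real \<Rightarrow> real" where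
  "Dm Fp Fm x = ln (Gp Fp Fm (- x) / Gm Fp Fm (- x))"

text \<open>Public log-likelihood ratio ell_t along an action sequence a
  (a i = True means a_i = +1, False means a_i = -1); agents are indexed from 1,
  ell_1 = 0; the value at index 0 is an unused convention.\<close>
fun pub_llr :: "real measure \<Rightarrow> real measure \<Rightarrow> (nat \<Rightarrow> bool) \<Rightarrow> nat \<Rightarrow> real" where
  "pub_llr Fp Fm a 0 = 0"
| "pub_llr Fp Fm a (Suc 0) = 0"
| "pub_llr Fp Fm a (Suc (Suc n)) =
     (let l = pub_llr Fp Fm a (Suc n) in
      l + (if a (Suc n) then Dp Fp Fm l else Dm Fp Fm l))"

text \<open>ell*_j: public LLR after j-1 consecutive +1 actions; 0 for j \<le> 1.\<close>
definition lstar :: "real measure \<Rightarrow> real measure \<Rightarrow> int \<Rightarrow> real" where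
  "lstar Fp Fm j = (if j \<le> 1 then 0 else pub_llr Fp Fm (\<lambda>_. True) (nat j))"

definition social_learning_model :: "real measure \<Rightarrow> real measure \<Rightarrow> bool" where
  "social_learning_model Fp Fm \<longleftrightarrow>
     prob_space Fp \<and> prob_space Fm \<and>
     sets Fp = sets borel \<and> sets Fm = sets borel \<and>
     absolutely_continuous Fp Fm \<and> absolutely_continuous Fm Fp \<and>
     (\<forall>M. measure Fp {s. priv_llr Fp Fm s > M} + measure Fm {s. priv_llr Fp Fm s > M} > 0 \<and>
          measure Fp {s. priv_llr Fp Fm s < - M} + measure Fm {s. priv_llr Fp Fm s < - M} > 0)"

definition left_tail_convex_diff :: "(real \<Rightarrow> real) \<Rightarrow> bool" where
  "left_tail_convex_diff G \<longleftrightarrow>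
     (\<exists>x0. convex_on {..<x0} G \<and> (\<forall>x<x0. G differentiable (at x)))"

end

theory Submission
  imports Defs
begin


lemma iter_ge:
  fixes f :: "real \<Rightarrow> real"
  assumes ge: "\<And>x. f x \<ge> x"
  shows "(f^^n) y \<le> (f^^(n+k)) y"
proof (induction k)
  case (Suc k) thus ?case using ge[of "(f^^(n+k)) y"] by simp
qed simp

lemma grow:
  fixes f :: "real \<Rightarrow> real"
  assumes ge: "\<And>x. f x \<ge> x" and T: "T \<ge> 0"
    and dl: "\<And>x. 0 \<le> x \<Longrightarrow> x \<le> T \<Longrightarrow> f x \<ge> x + d" and d: "d > 0"
    and y: "y \<ge> 0"
  shows "(f^^n) y \<ge> min T (n * d)"
proof (induction n)
  case 0 thus ?case using y T by simp
next
  case (Suc n)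
  let ?v = "(f^^n) y"
  have v0: "?v \<ge> 0" using iter_ge[of f 0 y n] ge y by simp
  show ?case
  proof (cases "?v \<ge> T")
    case True
    thus ?thesis using ge[of ?v] by simp
  next
    case False
    hence "?v \<ge> n * d" using Suc by (simp add: min_def split: if_splits)
    hence "f ?v \<ge> (Suc n) * d" using dl[of ?v] v0 False by (simp add: algebra_simps)
    thus ?thesis by simp
  qed
qed

lemma core:
  fixes f :: "real \<Rightarrow> real"
  assumes nn: "\<And>x. f x \<ge> 0" and ge: "\<And>x. f x \<ge> x"
    and dl: "\<And>m. m > 0 \<Longrightarrow> \<exists>d>0. \<forall>x. 0 \<le> x \<and> x \<le> m \<longrightarrow> f x \<ge> x + d"
    and mono: "\<And>x y. X \<le> x \<Longrightarrow> x \<le> y \<Longrightarrow> f x \<le> f y"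
  shows "\<exists>z::nat. z > 0 \<and> (\<forall>y0 s. s \<ge> 1 \<longrightarrow>
     (f^^s) y0 \<ge> (if int s - int z \<le> 1 then 0 else (f^^(nat (int s - int z) - 1)) 0))"
proof -
  define X' where "X' = max X 1"
  have X'p: "X' > 0" unfolding X'_def by simp
  obtain d1 where d1: "d1 > 0" "\<And>x. 0 \<le> x \<Longrightarrow> x \<le> X' \<Longrightarrow> f x \<ge> x + d1"
    using dl[OF X'p] by blast
  define u where "u n = (f^^n) 0" for n
  define K where "K = nat \<lceil>X' / d1\<rceil>"
  have "real K * d1 \<ge> X'" unfolding K_def using d1(1)
    by (metis le_nat_floor nat_ceiling_le_eq of_nat_ceiling pos_divide_le_eq order_refl
        mult.commute)
  hence uK: "u K \<ge> X'" using grow[of f X' d1 0 K] ge X'p d1 unfolding u_def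
    by (simp add: min_def split: if_splits)
  define T where "T = u K"
  have Tp: "T > 0" using uK X'p T_def by simp
  obtain d2 where d2: "d2 > 0" "\<And>x. 0 \<le> x \<Longrightarrow> x \<le> T \<Longrightarrow> f x \<ge> x + d2"
    using dl[OF Tp] by blast
  define P where "P = nat \<lceil>T / d2\<rceil>"
  have PT: "real P * d2 \<ge> T" unfolding P_def using d2(1)
    by (metis le_nat_floor nat_ceiling_le_eq of_nat_ceiling pos_divide_le_eq order_refl
        mult.commute)
  have umono: "u a \<le> u b" if "a \<le> b" for a b
    using iter_ge[of f a 0 "b - a"] ge that unfolding u_def by simp
  have main: "(f^^(Suc P + j)) y0 \<ge> u (K + j)" for y0 j
  proof (induction j)
    case 0
    have "(f^^P) (f y0) \<ge> min T (P * d2)"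
      using grow[of f T d2 "f y0" P] ge Tp d2 nn by simp
    hence "(f^^P) (f y0) \<ge> T" using PT by simp
    thus ?case by (simp add: T_def funpow_Suc_right del: funpow.simps)
  next
    case (Suc j)
    have a: "u (K + j) \<ge> X" using umono[of K "K+j"] uK X'_def by simp
    have "f (u (K + j)) \<le> f ((f^^(Suc P + j)) y0)" using mono[OF a Suc] .
    thus ?case by (simp add: u_def)
  qed
  show ?thesis
  proof (intro exI[of _ "Suc P"] conjI allI impI)
    fix y0 and s :: nat assume s: "s \<ge> 1"
    show "(f^^s) y0 \<ge> (if int s - int (Suc P) \<le> 1 then 0 else (f^^(nat (int s - int (Suc P)) - 1)) 0)"
    proof (cases "int s - int (Suc P) \<le> 1")
      case True
      obtain s' where "s = Suc s'" using s by (cases s) auto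
      thus ?thesis using True nn[of "(f^^s') y0"] by simp
    next
      case False
      define j where "j = s - Suc P"
      have sj: "s = Suc P + j" and j: "nat (int s - int (Suc P)) - 1 = j - 1" using False unfolding j_def by auto
      have "(f^^s) y0 \<ge> u (K + j)" using main sj by simp
      moreover have "u (j - 1) \<le> u (K + j)" by (rule umono) simp
      ultimately show ?thesis using False j by (simp add: u_def)
    qed
  qed simp
qed



locale slm =
  fixes Fp Fm :: "real measure"
  assumes P: "prob_space Fp" and M: "prob_space Fm"
    and sP: "sets Fp = sets borel" and sM: "sets Fm = sets borel"
    and acMP: "absolutely_continuous Fm Fp" and acPM: "absolutely_continuous Fp Fm"
begin

abbreviation "L \<equiv> priv_llr Fp Fm"

lemma spM: "space Fm = UNIV" using sets_eq_imp_space_eq[OF sM] by simp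
lemma spP: "space Fp = UNIV" using sets_eq_imp_space_eq[OF sP] by simp

lemma RN_meas: "RN_deriv Fm Fp \<in> borel_measurable borel"
  using borel_measurable_RN_deriv[of Fm Fp] measurable_cong_sets[OF sM refl] by blast

lemma L_meas: "L \<in> borel_measurable borel"
  unfolding priv_llr_def using RN_meas by measurable

lemma dens: "density Fm (RN_deriv Fm Fp) = Fp"
proof -
  interpret prob_space Fm by (rule M)
  show ?thesis using density_RN_deriv acMP sP sM by simp
qed

lemma K1: "AE s in Fm. RN_deriv Fm Fp s = ennreal (exp (L s))"
proof -
  interpret prob_space Fm by (rule M)
  interpret Pp: prob_space Fp by (rule P)
  have fin: "AE s in Fm. RN_deriv Fm Fp s \<noteq> \<infinity>"
    using RN_deriv_finite[of Fp] acMP sP sM Pp.sigma_finite_measure_axioms by simp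
  define Z where "Z = {s. RN_deriv Fm Fp s = 0}"
  have Zs: "Z \<in> sets borel" unfolding Z_def using RN_meas by measurable
  have "emeasure Fp Z = (\<integral>\<^sup>+ x. RN_deriv Fm Fp x * indicator Z x \<partial>Fm)"
    using emeasure_density[of "RN_deriv Fm Fp" Fm Z] dens Zs sM RN_meas
    by (metis borel_measurable_RN_deriv)
  also have "\<dots> = 0"
    by (rule nn_integral_zero') (auto simp: Z_def indicator_def)
  finally have "Z \<in> null_sets Fp" using Zs sP by (simp add: null_sets_def)
  hence "Z \<in> null_sets Fm" using acPM by (auto simp: absolutely_continuous_def)
  hence nz: "AE s in Fm. s \<notin> Z" by (rule AE_not_in)
  show ?thesis using fin nz
  proof eventually_elim
    case (elim s)
    then obtain r where r: "RN_deriv Fm Fp s = ennreal r" "r \<ge> 0"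
      by (cases "RN_deriv Fm Fp s") auto
    with elim have "r > 0" by (auto simp: Z_def)
    thus ?case using r by (simp add: priv_llr_def)
  qed
qed

lemma K2:
  assumes S: "S \<in> sets borel"
  shows "emeasure Fp S = (\<integral>\<^sup>+ s. ennreal (exp (L s)) * indicator S s \<partial>Fm)"
proof -
  have "emeasure Fp S = (\<integral>\<^sup>+ x. RN_deriv Fm Fp x * indicator S x \<partial>Fm)"
    using emeasure_density[of "RN_deriv Fm Fp" Fm S] dens S sM
    by (metis borel_measurable_RN_deriv)
  also have "\<dots> = (\<integral>\<^sup>+ s. ennreal (exp (L s)) * indicator S s \<partial>Fm)"
    by (rule nn_integral_cong_AE) (use K1 in eventually_elim, auto)
  finally show ?thesis .
qed

lemma setsB: "{s. L s > u} \<in> sets borel" "{s. L s \<le> u} \<in> sets borel" "{s. L s < u} \<in> sets borel"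
  using L_meas by measurable

lemma F2: "measure Fp {s. L s > u} \<ge> exp u * measure Fm {s. L s > u}"
proof -
  interpret Mm: prob_space Fm by (rule M)
  interpret Pp: prob_space Fp by (rule P)
  let ?S = "{s. L s > u}"
  have "ennreal (exp u) * emeasure Fm ?S = (\<integral>\<^sup>+ s. ennreal (exp u) * indicator ?S s \<partial>Fm)"
    using setsB(1) sM by (simp add: nn_integral_cmult_indicator)
  also have "\<dots> \<le> (\<integral>\<^sup>+ s. ennreal (exp (L s)) * indicator ?S s \<partial>Fm)"
    by (rule nn_integral_mono) (auto simp: indicator_def)
  also have "\<dots> = emeasure Fp ?S" using K2[OF setsB(1)] by simp
  finally show ?thesis
    by (simp add: Mm.emeasure_eq_measure Pp.emeasure_eq_measure ennreal_mult[symmetric])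
qed

lemma F2b: "measure Fp {s. L s \<le> u} \<le> exp u * measure Fm {s. L s \<le> u}"
proof -
  interpret Mm: prob_space Fm by (rule M)
  interpret Pp: prob_space Fp by (rule P)
  let ?S = "{s. L s \<le> u}"
  have "emeasure Fp ?S = (\<integral>\<^sup>+ s. ennreal (exp (L s)) * indicator ?S s \<partial>Fm)"
    using K2[OF setsB(2)] by simp
  also have "\<dots> \<le> (\<integral>\<^sup>+ s. ennreal (exp u) * indicator ?S s \<partial>Fm)"
    by (rule nn_integral_mono) (auto simp: indicator_def)
  also have "\<dots> = ennreal (exp u) * emeasure Fm ?S"
    using setsB(2) sM by (simp add: nn_integral_cmult_indicator)
  finally show ?thesis
    by (simp add: Mm.emeasure_eq_measure Pp.emeasure_eq_measure ennreal_mult[symmetric])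
qed

lemma F3:
  assumes "0 < m" "- m \<le> u" "u \<le> 0"
  shows "measure Fp {s. L s \<le> u} + (1 - exp (- m)) * measure Fm {s. L s < - m} \<le> measure Fm {s. L s \<le> u}"
proof -
  interpret Mm: prob_space Fm by (rule M)
  interpret Pp: prob_space Fp by (rule P)
  let ?S = "{s. L s \<le> u}" and ?T = "{s. L s < - m}"
  have k: "0 \<le> 1 - exp (- m)" using assms by simp
  have "emeasure Fp ?S + ennreal (1 - exp (- m)) * emeasure Fm ?T
     = (\<integral>\<^sup>+ s. ennreal (exp (L s)) * indicator ?S s \<partial>Fm) + (\<integral>\<^sup>+ s. ennreal (1 - exp (- m)) * indicator ?T s \<partial>Fm)"
    using K2[OF setsB(2)] setsB(3) sM by (simp add: nn_integral_cmult_indicator)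
  also have "\<dots> = (\<integral>\<^sup>+ s. ennreal (exp (L s)) * indicator ?S s + ennreal (1 - exp (- m)) * indicator ?T s \<partial>Fm)"
    by (rule nn_integral_add[symmetric]) (use L_meas sM setsB in auto)
  also have "\<dots> \<le> (\<integral>\<^sup>+ s. indicator ?S s \<partial>Fm)"
  proof (rule nn_integral_mono)
    fix s
    show "ennreal (exp (L s)) * indicator ?S s + ennreal (1 - exp (- m)) * indicator ?T s \<le> indicator ?S s"
    proof (cases "L s < - m")
      case True
      hence "exp (L s) < exp (- m)" by simp
      hence "ennreal (exp (L s)) + ennreal (1 - exp (- m)) \<le> ennreal 1"
        using k by (simp add: ennreal_plus[symmetric] del: ennreal_plus)
      thus ?thesis using True assms by (simp add: indicator_def)
    next
      case False
      have "exp (L s) \<le> 1" if "L s \<le> u" using that assms by simp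
      thus ?thesis using False by (simp add: indicator_def)
    qed
  qed
  also have "\<dots> = emeasure Fm ?S" using setsB(2) sM by simp
  finally show ?thesis using k
    by (simp add: Mm.emeasure_eq_measure Pp.emeasure_eq_measure ennreal_mult[symmetric] ennreal_plus[symmetric] del: ennreal_plus)
qed

lemma Gp_eq: "measure Fp {s. L s > u} = 1 - Gp Fp Fm u"
proof -
  interpret Pp: prob_space Fp by (rule P)
  have "{s. L s > u} = space Fp - {s. L s \<le> u}" using spP by auto
  thus ?thesis using Pp.prob_compl[of "{s. L s \<le> u}"] setsB sP by (simp add: Gp_def)
qed

lemma Gm_eq: "measure Fm {s. L s > u} = 1 - Gm Fp Fm u"
proof -
  interpret Mm: prob_space Fm by (rule M)
  have "{s. L s > u} = space Fm - {s. L s \<le> u}" using spM by auto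
  thus ?thesis using Mm.prob_compl[of "{s. L s \<le> u}"] setsB sM by (simp add: Gm_def)
qed

lemma Gm_mono: "u \<le> v \<Longrightarrow> Gm Fp Fm u \<le> Gm Fp Fm v"
proof -
  interpret Mm: prob_space Fm by (rule M)
  assume "u \<le> v"
  thus ?thesis unfolding Gm_def using setsB sM
    by (intro Mm.finite_measure_mono) auto
qed

lemma Gp_mono: "u \<le> v \<Longrightarrow> Gp Fp Fm u \<le> Gp Fp Fm v"
proof -
  interpret Pp: prob_space Fp by (rule P)
  assume "u \<le> v"
  thus ?thesis unfolding Gp_def using setsB sP
    by (intro Pp.finite_measure_mono) auto
qed

lemma Gm_le1: "Gm Fp Fm u \<le> 1"
proof -
  interpret Mm: prob_space Fm by (rule M)
  show ?thesis unfolding Gm_def by simp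
qed

lemma pos_transfer:
  assumes "measure Fp S + measure Fm S > 0" "S \<in> sets borel"
  shows "measure Fm S > 0"
proof (rule ccontr)
  interpret Mm: prob_space Fm by (rule M)
  interpret Pp: prob_space Fp by (rule P)
  assume "\<not> measure Fm S > 0"
  hence "measure Fm S = 0" using measure_nonneg[of Fm S] by linarith
  hence "S \<in> null_sets Fm" using assms(2) sM by (simp add: Mm.emeasure_eq_measure null_sets_def)
  hence "S \<in> null_sets Fp" using acMP by (auto simp: absolutely_continuous_def)
  hence "measure Fp S = 0" by (simp add: measure_def null_setsD1)
  thus False using assms \<open>measure Fm S = 0\<close> by simp
qed

context
  assumes unb: "\<forall>M. measure Fp {s. L s > M} + measure Fm {s. L s > M} > 0 \<and>
          measure Fp {s. L s < - M} + measure Fm {s. L s < - M} > 0"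
begin

lemma Qpos: "1 - Gm Fp Fm u > 0"
  using pos_transfer[of "{s. L s > u}"] unb setsB Gm_eq by auto

lemma Tpos: "measure Fm {s. L s < - m} > 0"
  using pos_transfer[of "{s. L s < - m}"] unb setsB by auto

lemma PgeQ: "1 - Gp Fp Fm u \<ge> exp u * (1 - Gm Fp Fm u)"
  using F2[of u] Gp_eq Gm_eq by simp

lemma PgeQ1: "1 - Gp Fp Fm u \<ge> 1 - Gm Fp Fm u"
proof (cases "u \<le> 0")
  case True
  have "Gp Fp Fm u \<le> exp u * Gm Fp Fm u" using F2b[of u] by (simp add: Gp_def Gm_def)
  also have "\<dots> \<le> Gm Fp Fm u" using True measure_nonneg[of Fm] by (simp add: Gm_def mult_left_le_one_le)
  finally show ?thesis by simp
next
  case False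
  have "exp u * (1 - Gm Fp Fm u) \<ge> 1 - Gm Fp Fm u" using False Qpos[of u] by simp
  thus ?thesis using PgeQ[of u] by linarith
qed

definition "ff x = x + Dp Fp Fm x"

lemma ff_eq: "ff x = x + ln (1 - Gp Fp Fm (-x)) - ln (1 - Gm Fp Fm (-x))"
proof -
  have "1 - Gm Fp Fm (-x) > 0" by (rule Qpos)
  moreover have "1 - Gp Fp Fm (-x) > 0" using PgeQ1[of "-x"] Qpos[of "-x"] by linarith
  ultimately show ?thesis unfolding ff_def Dp_def by (simp add: ln_div)
qed

lemma ff_nn: "ff x \<ge> 0"
proof -
  have q: "1 - Gm Fp Fm (-x) > 0" by (rule Qpos)
  have "ln (1 - Gp Fp Fm (-x)) \<ge> ln (exp (-x) * (1 - Gm Fp Fm (-x)))"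
    using PgeQ[of "-x"] q by (intro ln_mono) auto
  thus ?thesis using q by (simp add: ff_eq ln_mult)
qed

lemma ff_ge: "ff x \<ge> x"
proof -
  have q: "1 - Gm Fp Fm (-x) > 0" by (rule Qpos)
  have "ln (1 - Gp Fp Fm (-x)) \<ge> ln (1 - Gm Fp Fm (-x))"
    using PgeQ1[of "-x"] q by (intro ln_mono) auto
  thus ?thesis by (simp add: ff_eq)
qed

lemma ff_dl: assumes m: "m > 0" shows "\<exists>d>0. \<forall>x. 0 \<le> x \<and> x \<le> m \<longrightarrow> ff x \<ge> x + d"
proof -
  define e where "e = (1 - exp (- m)) * measure Fm {s. L s < - m}"
  have e: "e > 0" unfolding e_def using Tpos[of m] m by simp
  show ?thesis
  proof (intro exI[of _ "ln (1 + e)"] conjI allI impI)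
    show "ln (1 + e) > 0" using e by simp
    fix x assume x: "0 \<le> x \<and> x \<le> m"
    let ?Q = "1 - Gm Fp Fm (-x)" and ?P = "1 - Gp Fp Fm (-x)"
    have q: "?Q > 0" by (rule Qpos)
    have q1: "?Q \<le> 1" using measure_nonneg[of Fm] by (simp add: Gm_def)
    have "Gp Fp Fm (-x) + e \<le> Gm Fp Fm (-x)" using F3[of m "-x"] m x
      by (simp add: Gp_def Gm_def e_def)
    hence Pe: "?P \<ge> ?Q + e" by simp
    have "?Q * (1 + e) \<le> ?Q + e" using q1 e by (simp add: algebra_simps)
    hence "?P \<ge> ?Q * (1 + e)" using Pe by linarith
    hence "ln ?P \<ge> ln (?Q * (1 + e))" using q e by (intro ln_mono) auto
    thus "ff x \<ge> x + ln (1 + e)" using q e by (simp add: ff_eq ln_mult)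
  qed
qed

lemma ff_mono:
  assumes cv: "convex_on {..<x0} (Gm Fp Fm)" and xy: "2 - x0 \<le> x" "x \<le> y"
  shows "ff x \<le> ff y"
proof -
  let ?G = "Gm Fp Fm"
  define c where "c = - y"
  define d where "d = - x"
  have cd: "c \<le> d" "d + 1 < x0" using xy unfolding c_def d_def by auto
  have slope: "?G d - ?G c \<le> (d - c) * (?G (d + 1) - ?G d)"
  proof (cases "c = d")
    case False
    hence lt: "c < d" using cd by simp
    have i: "c \<in> {..<x0}" "d + 1 \<in> {..<x0}" using cd lt by auto
    have s1: "(?G c - ?G d) / (c - d) \<le> (?G c - ?G (d+1)) / (c - (d+1))"
      using convex_on_slope_le(1)[OF cv i, where t=d] lt by simp
    have s2: "(?G c - ?G (d+1)) / (c - (d+1)) \<le> (?G d - ?G (d+1)) / (d - (d+1))"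
      using convex_on_slope_le(2)[OF cv i, where t=d] lt by simp
    have "(?G d - ?G c) / (d - c) \<le> ?G (d + 1) - ?G d"
    proof -
      have e1: "(?G c - ?G d) / (c - d) = (?G d - ?G c) / (d - c)"
        by (metis minus_diff_eq minus_divide_divide)
      have e2: "(?G d - ?G (d+1)) / (d - (d+1)) = ?G (d + 1) - ?G d" by simp
      show ?thesis using s1 s2 e1 e2 by linarith
    qed
    thus ?thesis using lt by (simp add: divide_simps mult.commute)
  qed simp
  have G1: "?G (d + 1) \<le> 1" by (rule Gm_le1)
  have qd: "1 - ?G d > 0" "1 - ?G c > 0" by (rule Qpos)+
  have "?G (d+1) - ?G d \<le> 1 - ?G d" using G1 by simp
  hence "?G d - ?G c \<le> (d - c) * (1 - ?G d)" using slope mult_left_mono[of "?G (d+1) - ?G d" "1 - ?G d" "d - c"] cd by linarith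
  hence "1 - ?G c \<le> (1 - ?G d) * (1 + (d - c))" by (simp add: algebra_simps)
  also have "\<dots> \<le> (1 - ?G d) * exp (d - c)" using qd by (intro mult_left_mono) (auto simp: exp_ge_add_one_self add.commute)
  finally have "ln (1 - ?G c) \<le> ln ((1 - ?G d) * exp (d - c))" using qd by (intro ln_mono) auto
  hence q: "ln (1 - ?G c) - ln (1 - ?G d) \<le> d - c" using qd by (simp add: ln_mult)
  have pd: "1 - Gp Fp Fm d > 0" using PgeQ1[of d] qd by linarith
  have "1 - Gp Fp Fm d \<le> 1 - Gp Fp Fm c" using Gp_mono[OF cd(1)] by simp
  hence "ln (1 - Gp Fp Fm d) \<le> ln (1 - Gp Fp Fm c)" using pd by (intro ln_mono) auto
  thus ?thesis using q unfolding ff_eq c_def d_def by simp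
qed

end

end

lemma pl_iter:
  assumes t: "t \<ge> 1" and a: "\<forall>i. t \<le> i \<and> i \<le> t + s - 1 \<longrightarrow> a i"
  shows "k \<le> s \<Longrightarrow> pub_llr Fp Fm a (t + k) = ((\<lambda>l. l + Dp Fp Fm l)^^k) (pub_llr Fp Fm a t)"
proof (induction k)
  case (Suc k)
  obtain m where m: "t + k = Suc m" using t by (cases "t + k") auto
  have "a (Suc m)" using a Suc.prems m by auto
  hence "pub_llr Fp Fm a (t + Suc k) = pub_llr Fp Fm a (t + k) + Dp Fp Fm (pub_llr Fp Fm a (t + k))"
    using m by (simp add: Let_def)
  thus ?case using Suc by simp
qed simp

lemma pl_const: "pub_llr Fp Fm (\<lambda>_. True) (Suc n) = ((\<lambda>l. l + Dp Fp Fm l)^^n) 0"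
proof (induction n)
  case (Suc n) thus ?case by (simp add: Let_def)
qed simp

theorem lemma8:
  fixes Fp Fm :: "real measure"
  assumes "social_learning_model Fp Fm"
    and "left_tail_convex_diff (Gm Fp Fm)"
  shows "\<exists>z::nat. z > 0 \<and>
    (\<forall>(a::nat \<Rightarrow> bool) t s. t \<ge> 1 \<longrightarrow> s \<ge> 1 \<longrightarrow>
       (\<forall>i. t \<le> i \<and> i \<le> t + s - 1 \<longrightarrow> a i) \<longrightarrow>
       pub_llr Fp Fm a (t + s) \<ge> lstar Fp Fm (int s - int z))"
proof -
  have sl: "slm Fp Fm" using assms(1) unfolding social_learning_model_def slm_def by blast
  interpret slm Fp Fm by (rule sl)
  have unb: "\<forall>M. measure Fp {s. L s > M} + measure Fm {s. L s > M} > 0 \<and>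
          measure Fp {s. L s < - M} + measure Fm {s. L s < - M} > 0"
    using assms(1) unfolding social_learning_model_def by blast
  obtain x0 where cv: "convex_on {..<x0} (Gm Fp Fm)"
    using assms(2) unfolding left_tail_convex_diff_def by blast
  define f where "f = (\<lambda>l. l + Dp Fp Fm l)"
  have fe: "f x = ff x" for x unfolding f_def ff_def[OF unb] by simp
  obtain z where z: "z > 0" and zz: "\<forall>y0 s. s \<ge> 1 \<longrightarrow>
     (f^^s) y0 \<ge> (if int s - int z \<le> 1 then 0 else (f^^(nat (int s - int z) - 1)) 0)"
  proof -
    have "\<exists>z::nat. z > 0 \<and> (\<forall>y0 s. s \<ge> 1 \<longrightarrow>
     (f^^s) y0 \<ge> (if int s - int z \<le> 1 then 0 else (f^^(nat (int s - int z) - 1)) 0))"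
    proof (rule core[of f "2 - x0"])
      show "f x \<ge> 0" for x unfolding fe by (rule ff_nn[OF unb])
      show "f x \<ge> x" for x unfolding fe by (rule ff_ge[OF unb])
      show "\<exists>d>0. \<forall>x. 0 \<le> x \<and> x \<le> m \<longrightarrow> f x \<ge> x + d" if "m > 0" for m
        unfolding fe by (rule ff_dl[OF unb that])
      show "f x \<le> f y" if "2 - x0 \<le> x" "x \<le> y" for x y
        unfolding fe by (rule ff_mono[OF unb cv that])
    qed
    thus ?thesis using that by blast
  qed
  show ?thesis
  proof (intro exI[of _ z] conjI allI impI)
    show "z > 0" by (rule z)
    fix a :: "nat \<Rightarrow> bool" and t s :: nat
    assume t: "t \<ge> 1" and s: "s \<ge> 1" and a: "\<forall>i. t \<le> i \<and> i \<le> t + s - 1 \<longrightarrow> a i"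
    have pl: "pub_llr Fp Fm a (t + s) = (f^^s) (pub_llr Fp Fm a t)"
      using pl_iter[OF t a, of s] unfolding f_def by simp
    have ls: "lstar Fp Fm (int s - int z) = (if int s - int z \<le> 1 then 0 else (f^^(nat (int s - int z) - 1)) 0)"
    proof (cases "int s - int z \<le> 1")
      case False
      hence "nat (int s - int z) = Suc (nat (int s - int z) - 1)" by simp
      hence "pub_llr Fp Fm (\<lambda>_. True) (nat (int s - int z)) = (f^^(nat (int s - int z) - 1)) 0"
        using pl_const[of Fp Fm "nat (int s - int z) - 1"] unfolding f_def by simp
      thus ?thesis using False by (simp add: lstar_def)
    qed (simp add: lstar_def)
    show "pub_llr Fp Fm a (t + s) \<ge> lstar Fp Fm (int s - int z)"
    proof -
      have "(f^^s) (pub_llr Fp Fm a t) \<ge> (if int s - int z \<le> 1 then 0 else (f^^(nat (int s - int z) - 1)) 0)"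
        using zz s by blast
      thus ?thesis by (simp only: pl ls)
    qed
  qed
qed

end
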